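(* (1) If $A\in\mathrm{Sym}_{>}(\mathbb C^{2d})$, then $\bar A\#A\in\mathrm{Sym}_{\rm p}(\mathbb R^{2d})$. (2) If $A\in\mathrm{Sym}^{\rm qnd}_{>}(\mathbb C^{2d})$, then $\bar A\#A\in\mathrm{Sym}_{\rm p}^{\rm qnd}(\mathbb R^{2d})$.
   Context: Let $d\ge1$, let $\mathbb 1$ denote an identity matrix and $\theta=\begin{bmatrix}0&-i\mathbb 1_d\\ i\mathbb 1_d&0\end{bmatrix}$. $\mathrm{Sym}_{>}(\mathbb C^{n})$ is the set of complex symmetric $n\times n$ matrices with positive definite real part; $\mathrm{Sym}^{\rm qnd}_{>}(\mathbb C^{2d})=\{A\in\mathrm{Sym}_{>}(\mathbb C^{2d}):\det(\mathbb 1+A\theta)\ne0\}$; $\mathrm{Sym}_{>}(\mathbb R^{n})$ is the set of real symmetric positive definite matrices; $\mathrm{Sym}_{\rm p}(\mathbb R^{2d})=\{A\in\mathrm{Sym}_{>}(\mathbb R^{2d}):\sigma(A\theta)\subset[-1,1]\}$ and $\mathrm{Sym}_{\rm p}^{\rm qnd}(\mathbb R^{2d})=\{A\in\mathrm{Sym}_{\rm p}(\mathbb R^{2d}):\det(\mathbb 1+A\theta)\ne0\}$. For $A,B\in\mathrm{Sym}_>(\mathbb C^{2d})$, $A\#B:=J^TM^{-1}J$ with $M=\begin{bmatrix}\theta A\theta&-\theta\\ \theta&\theta B\theta\end{bmatrix}$ (invertible in this case) and $J=\begin{bmatrix}-\mathbb 1_{2d}\\ \mathbb 1_{2d}\end{bmatrix}$.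 $\bar A$ is the entrywise complex conjugate. *)

theory Defs
  imports Complex_Main "Jordan_Normal_Form.Matrix" "Jordan_Normal_Form.Determinant"
    "Jordan_Normal_Form.Char_Poly"
begin

text \<open>All matrices are complex matrices (JNF type complex mat); a matrix is "real"
 if all its entries are real.\<close>

definition theta :: "nat \<Rightarrow> complex mat" where
  "theta d = four_block_mat (0\<^sub>m d d) ((- \<i>) \<cdot>\<^sub>m 1\<^sub>m d) (\<i> \<cdot>\<^sub>m 1\<^sub>m d) (0\<^sub>m d d)"

definition conj_mat :: "complex mat \<Rightarrow> complex mat" where
  "conj_mat A = map_mat cnj A"

definition real_mat :: "complex mat \<Rightarrow> bool" where
  "real_mat A = (\<forall>i < dim_row A. \<forall>j < dim_col A. A $$ (i,j) \<in> \<real>)"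

definition pos_def_real :: "nat \<Rightarrow> real mat \<Rightarrow> bool" where
  "pos_def_real n P = (P \<in> carrier_mat n n \<and> transpose_mat P = P \<and>
     (\<forall>x \<in> carrier_vec n. x \<noteq> 0\<^sub>v n \<longrightarrow> x \<bullet> (P *\<^sub>v x) > 0))"

definition Sym_gt_C :: "nat \<Rightarrow> complex mat set" where
  "Sym_gt_C n = {A. A \<in> carrier_mat n n \<and> transpose_mat A = A \<and> pos_def_real n (map_mat Re A)}"

definition Sym_gt_C_qnd :: "nat \<Rightarrow> complex mat set" where
  "Sym_gt_C_qnd d = {A. A \<in> Sym_gt_C (2*d) \<and> det (1\<^sub>m (2*d) + A * theta d) \<noteq> 0}"

definition Sym_gt_R :: "nat \<Rightarrow> complex mat set" where
  "Sym_gt_R n = {A. A \<in> carrier_mat n n \<and> real_mat A \<and> transpose_mat A = A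
      \<and> pos_def_real n (map_mat Re A)}"

definition Sym_p :: "nat \<Rightarrow> complex mat set" where
  "Sym_p d = {A. A \<in> Sym_gt_R (2*d) \<and>
     (\<forall>e. eigenvalue (A * theta d) e \<longrightarrow> e \<in> \<real> \<and> -1 \<le> Re e \<and> Re e \<le> 1)}"

definition Sym_p_qnd :: "nat \<Rightarrow> complex mat set" where
  "Sym_p_qnd d = {A. A \<in> Sym_p d \<and> det (1\<^sub>m (2*d) + A * theta d) \<noteq> 0}"

definition mat_inv :: "complex mat \<Rightarrow> complex mat" where
  "mat_inv M = (SOME B. inverts_mat M B \<and> inverts_mat B M)"

text \<open>J = [-1; 1], a (4d) x (2d) matrix\<close>
definition Jmat :: "nat \<Rightarrow> complex mat" where
  "Jmat d = mat (4*d) (2*d) (\<lambda>(i,j). if i = j then -1 else if i = j + 2*d then 1 else 0)"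

definition Mmat :: "nat \<Rightarrow> complex mat \<Rightarrow> complex mat \<Rightarrow> complex mat" where
  "Mmat d A B = four_block_mat (theta d * A * theta d) (- theta d) (theta d) (theta d * B * theta d)"

definition sharp :: "nat \<Rightarrow> complex mat \<Rightarrow> complex mat \<Rightarrow> complex mat" where
  "sharp d A B = transpose_mat (Jmat d) * mat_inv (Mmat d A B) * Jmat d"

end

theory Submission imports Defs begin

lemma theta_carrier[simp]: "theta d \<in> carrier_mat (2*d) (2*d)"
  unfolding theta_def mult_2 by (rule four_block_carrier_mat, auto)

lemma theta_dims[simp]: "dim_row (theta d) = 2*d" "dim_col (theta d) = 2*d"
  using theta_carrier[of d] by (auto simp del: theta_carrier)

lemma mult_mat_vec_sum: assumes "A \<in> carrier_mat n m" "v \<in> carrier_vec m" "i < n"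
  shows "(A *\<^sub>v v) $ i = (\<Sum>j<m. A $$ (i,j) * v $ j)"
  using assms by (auto simp: scalar_prod_def lessThan_atLeast0 intro!: sum.cong)

declare index_mult_mat_vec[simp del]

lemma theta_index: "i < 2*d \<Longrightarrow> j < 2*d \<Longrightarrow> theta d $$ (i,j) =
  (if i < d then (if j = i + d then -\<i> else 0) else (if j + d = i then \<i> else 0))"
  unfolding theta_def by auto

lemma theta_mult_vec_index: assumes v: "v \<in> carrier_vec (2*d)" and i: "i < 2*d"
  shows "(theta d *\<^sub>v v) $ i = (if i < d then -\<i> * v $ (i+d) else \<i> * v $ (i-d))"
proof -
  have "(theta d *\<^sub>v v) $ i = (\<Sum>j<2*d. theta d $$ (i,j) * v $ j)"
    using v i by (intro mult_mat_vec_sum, auto)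
  also have "\<dots> = (\<Sum>j<2*d. (if i < d then (if j = i + d then -\<i> * v $ j else 0) else (if j = i - d then \<i> * v $ j else 0)))"
    by (rule sum.cong, auto simp: theta_index i)
  also have "\<dots> = (if i < d then -\<i> * v $ (i+d) else \<i> * v $ (i-d))"
    using i by (cases "i < d", auto)
  finally show ?thesis .
qed

lemma theta_theta_vec: assumes v: "v \<in> carrier_vec (2*d)"
  shows "theta d *\<^sub>v (theta d *\<^sub>v v) = v"
proof (rule eq_vecI)
  fix i assume "i < dim_vec v"
  then have i: "i < 2*d" using v by auto
  show "(theta d *\<^sub>v (theta d *\<^sub>v v)) $ i = v $ i"
  proof -
    have tv: "theta d *\<^sub>v v \<in> carrier_vec (2*d)" by (rule mult_mat_vec_carrier[OF theta_carrier v])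
    show ?thesis unfolding theta_mult_vec_index[OF tv i] using i
      by (auto simp: theta_mult_vec_index[OF v] simp del: index_mult_mat_vec)
  qed
qed (use v in auto)

lemma theta_herm: "i < 2*d \<Longrightarrow> j < 2*d \<Longrightarrow> theta d $$ (i,j) = cnj (theta d $$ (j,i))"
  by (auto simp: theta_index)

lemma theta_transpose: "transpose_mat (theta d) = - theta d"
  by (rule eq_matI, auto simp: theta_index)

lemma theta_conj: "conj_mat (theta d) = - theta d"
  unfolding conj_mat_def by (rule eq_matI, auto simp: theta_index)

lemma theta_theta: "theta d * theta d = 1\<^sub>m (2*d)"
proof (rule eq_matI)
  fix i j assume "i < dim_row (1\<^sub>m (2 * d))" "j < dim_col (1\<^sub>m (2 * d)::complex mat)"
  then have i: "i < 2*d" and j: "j < 2*d" by auto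
  have c: "col (theta d) j \<in> carrier_vec (2*d)" unfolding carrier_vec_def by simp
  have "(theta d * theta d) $$ (i,j) = (theta d *\<^sub>v col (theta d) j) $ i"
    using i j by (simp add: index_mult_mat index_mult_mat_vec)
  also have "\<dots> = 1\<^sub>m (2*d) $$ (i,j)"
    using i j by (auto simp: theta_mult_vec_index[OF c i] theta_index)
  finally show "(theta d * theta d) $$ (i,j) = 1\<^sub>m (2*d) $$ (i,j)" .
qed auto


definition hf :: "nat \<Rightarrow> complex mat \<Rightarrow> complex vec \<Rightarrow> complex vec \<Rightarrow> complex" where
  "hf n H a b = (\<Sum>i<n. cnj (a$i) * (\<Sum>j<n. H $$ (i,j) * b $ j))"

lemma hf_alt: assumes "H \<in> carrier_mat n n" "b \<in> carrier_vec n"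
  shows "hf n H a b = (\<Sum>i<n. cnj (a$i) * (H *\<^sub>v b) $ i)"
  unfolding hf_def by (rule sum.cong, insert assms, auto simp: mult_mat_vec_sum)

lemma hf_adj: assumes "\<And>i j. i < n \<Longrightarrow> j < n \<Longrightarrow> H $$ (i,j) = cnj (H $$ (j,i))"
  shows "hf n H a b = cnj (hf n H b a)"
proof -
  have "cnj (hf n H b a) = (\<Sum>i<n. \<Sum>j<n. b$i * cnj (H $$ (i,j)) * cnj (a$j))"
    unfolding hf_def by (simp add: cnj_sum sum_distrib_left mult.assoc)
  also have "\<dots> = (\<Sum>i<n. \<Sum>j<n. b$i * H $$ (j,i) * cnj (a$j))"
    by (rule sum.cong, simp, rule sum.cong, simp, subst assms, auto)
  also have "\<dots> = (\<Sum>j<n. \<Sum>i<n. b$i * H $$ (j,i) * cnj (a$j))"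
    by (rule sum.swap)
  also have "\<dots> = hf n H a b"
    unfolding hf_def by (simp add: sum_distrib_left mult_ac)
  finally show ?thesis by simp
qed

lemma hf_real: assumes "\<And>i j. i < n \<Longrightarrow> j < n \<Longrightarrow> H $$ (i,j) = cnj (H $$ (j,i))"
  shows "hf n H a a \<in> \<real>"
  using hf_adj[of n H a a, OF assms] by (metis Reals_cnj_iff)

lemma pos_def_ge: assumes "pos_def_real n P" "x \<in> carrier_vec n"
  shows "x \<bullet> (P *\<^sub>v x) \<ge> 0" and "x \<bullet> (P *\<^sub>v x) = 0 \<Longrightarrow> x = 0\<^sub>v n"
proof -
  have P: "P \<in> carrier_mat n n" using assms(1) unfolding pos_def_real_def by blast
  have pd: "x \<noteq> 0\<^sub>v n \<Longrightarrow> x \<bullet> (P *\<^sub>v x) > 0" using assms unfolding pos_def_real_def by blast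
  show "x \<bullet> (P *\<^sub>v x) \<ge> 0"
  proof (cases "x = 0\<^sub>v n")
    case True
    have "P *\<^sub>v x \<in> carrier_vec n" using P assms(2) by simp
    thus ?thesis using True by simp
  next
    case False thus ?thesis using pd by simp
  qed
  show "x \<bullet> (P *\<^sub>v x) = 0 \<Longrightarrow> x = 0\<^sub>v n"
    using pd by (cases "x = 0\<^sub>v n") auto
qed

lemma re_form: assumes A: "A \<in> carrier_mat n n" and z: "z \<in> carrier_vec n"
  shows "Re (hf n (map_mat (\<lambda>a. complex_of_real (Re a)) A) z z) =
    vec n (\<lambda>i. Re (z$i)) \<bullet> (map_mat Re A *\<^sub>v vec n (\<lambda>i. Re (z$i))) +
    vec n (\<lambda>i. Im (z$i)) \<bullet> (map_mat Re A *\<^sub>v vec n (\<lambda>i. Im (z$i)))"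
proof -
  have l: "Re (hf n (map_mat (\<lambda>a. complex_of_real (Re a)) A) z z) =
     (\<Sum>i<n. \<Sum>j<n. Re (A $$ (i,j)) * (Re (z$i) * Re (z$j)) + Re (A $$ (i,j)) * (Im (z$i) * Im (z$j)))"
    unfolding hf_def sum_distrib_left Re_sum
  proof (intro sum.cong refl)
    fix i j assume "i \<in> {..<n}" "j \<in> {..<n}"
    then show "Re (cnj (z $ i) * (map_mat (\<lambda>a. complex_of_real (Re a)) A $$ (i, j) * z $ j)) =
      Re (A $$ (i,j)) * (Re (z$i) * Re (z$j)) + Re (A $$ (i,j)) * (Im (z$i) * Im (z$j))"
      using A by (simp add: algebra_simps)
  qed
  have r1: "vec n f \<bullet> (map_mat Re A *\<^sub>v vec n f) = (\<Sum>i<n. \<Sum>j<n. Re (A $$ (i,j)) * (f i * f j))" for f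
  proof -
    have e: "\<And>i. i < n \<Longrightarrow> (map_mat Re A *\<^sub>v vec n f) $ i = (\<Sum>j<n. Re (A $$ (i,j)) * f j)"
      by (subst mult_mat_vec_sum[of _ n n], insert A, auto)
    have "dim_row A = n" using A by auto
    then have "vec n f \<bullet> (map_mat Re A *\<^sub>v vec n f) = (\<Sum>i<n. f i * (\<Sum>j<n. Re (A $$ (i,j)) * f j))"
      unfolding scalar_prod_def by (auto simp: lessThan_atLeast0[symmetric] e intro!: sum.cong)
    also have "\<dots> = (\<Sum>i<n. \<Sum>j<n. Re (A $$ (i,j)) * (f i * f j))"
      unfolding sum_distrib_left by (intro sum.cong refl, simp add: mult_ac)
    finally show ?thesis .
  qed
  show ?thesis unfolding l r1 sum.distrib by simp
qed

lemma re_form_pos: assumes A: "A \<in> carrier_mat n n" and P: "pos_def_real n (map_mat Re A)"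
  and z: "z \<in> carrier_vec n"
  shows "Re (hf n (map_mat (\<lambda>a. complex_of_real (Re a)) A) z z) \<ge> 0"
   and "Re (hf n (map_mat (\<lambda>a. complex_of_real (Re a)) A) z z) = 0 \<Longrightarrow> z = 0\<^sub>v n"
proof -
  let ?a = "vec n (\<lambda>i. Re (z$i))" and ?b = "vec n (\<lambda>i. Im (z$i))"
  have a: "?a \<in> carrier_vec n" and b: "?b \<in> carrier_vec n" by auto
  note e = re_form[OF A z]
  show "Re (hf n (map_mat (\<lambda>a. complex_of_real (Re a)) A) z z) \<ge> 0"
    unfolding e using pos_def_ge(1)[OF P a] pos_def_ge(1)[OF P b] by linarith
  assume "Re (hf n (map_mat (\<lambda>a. complex_of_real (Re a)) A) z z) = 0"
  then have "?a \<bullet> (map_mat Re A *\<^sub>v ?a) = 0" "?b \<bullet> (map_mat Re A *\<^sub>v ?b) = 0"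
    unfolding e using pos_def_ge(1)[OF P a] pos_def_ge(1)[OF P b] by linarith+
  from pos_def_ge(2)[OF P a this(1)] pos_def_ge(2)[OF P b this(2)]
  have "?a = 0\<^sub>v n" "?b = 0\<^sub>v n" .
  show "z = 0\<^sub>v n"
  proof (rule eq_vecI)
    fix i assume "i < dim_vec (0\<^sub>v n :: complex vec)"
    then have i: "i < n" by auto
    have "Re (z$i) = 0" "Im (z$i) = 0" using arg_cong[OF \<open>?a = 0\<^sub>v n\<close>, of "\<lambda>v. v$i"]
      arg_cong[OF \<open>?b = 0\<^sub>v n\<close>, of "\<lambda>v. v$i"] i by auto
    then show "z $ i = 0\<^sub>v n $ i" using i by (simp add: complex_eq_iff)
  qed (use z in auto)
qed


lemma mv_add: assumes "(H :: complex mat) \<in> carrier_mat n n" "a \<in> carrier_vec n" "b \<in> carrier_vec n" "i < n"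
  shows "(H *\<^sub>v (a + b)) $ i = (H *\<^sub>v a) $ i + (H *\<^sub>v b) $ i"
  using assms by (simp add: mult_mat_vec_sum[OF assms(1)] ring_distribs sum.distrib)

lemma mv_minus: assumes "(H :: complex mat) \<in> carrier_mat n n" "a \<in> carrier_vec n" "b \<in> carrier_vec n" "i < n"
  shows "(H *\<^sub>v (a - b)) $ i = (H *\<^sub>v a) $ i - (H *\<^sub>v b) $ i"
proof -
  have "(H *\<^sub>v (a - b)) $ i = (\<Sum>j<n. H$$(i,j) * (a - b)$j)" by (rule mult_mat_vec_sum, insert assms, auto)
  also have "\<dots> = (\<Sum>j<n. H$$(i,j)*a$j - H$$(i,j)*b$j)" using assms by (intro sum.cong, auto simp: right_diff_distrib)
  also have "\<dots> = (H *\<^sub>v a)$i - (H *\<^sub>v b)$i" by (simp add: sum_subtractf mult_mat_vec_sum[OF assms(1) _ assms(4)] assms)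
  finally show ?thesis .
qed

lemma mv_smult: assumes "(H :: complex mat) \<in> carrier_mat n n" "a \<in> carrier_vec n" "i < n"
  shows "(H *\<^sub>v (c \<cdot>\<^sub>v a)) $ i = c * (H *\<^sub>v a) $ i"
  using assms by (auto simp: mult_mat_vec_sum[OF assms(1)] sum_distrib_left intro!: sum.cong)

lemma hf_expand: assumes "a \<in> carrier_vec n" "b \<in> carrier_vec n"
  shows "hf n H (a - c \<cdot>\<^sub>v b) (a - c \<cdot>\<^sub>v b) = hf n H a a - c * hf n H a b - cnj c * hf n H b a + cnj c * c * hf n H b b"
proof -
  have "hf n H (a - c \<cdot>\<^sub>v b) (a - c \<cdot>\<^sub>v b) = (\<Sum>i<n. \<Sum>j<n. cnj (a$i - c * b$i) * (H $$ (i,j) * (a$j - c * b$j)))"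
    unfolding hf_def sum_distrib_left using assms by (intro sum.cong refl, auto)
  also have "\<dots> = (\<Sum>i<n. \<Sum>j<n.
     cnj (a$i) * (H $$ (i,j) * a $ j) - c * (cnj (a$i) * (H $$ (i,j) * b $ j)) - cnj c * (cnj (b$i) * (H $$ (i,j) * a $ j))
     + cnj c * c * (cnj (b$i) * (H $$ (i,j) * b $ j)))"
    by (intro sum.cong refl, simp add: algebra_simps)
  also have "\<dots> = hf n H a a - c * hf n H a b - cnj c * hf n H b a + cnj c * c * hf n H b b"
    unfolding hf_def sum_distrib_left by (simp add: sum.distrib sum_subtractf sum_distrib_left)
  finally show ?thesis .
qed


lemma hf_smult: assumes "a \<in> carrier_vec n" "b \<in> carrier_vec n"
  shows "hf n H (c \<cdot>\<^sub>v a) (c \<cdot>\<^sub>v b) = cnj c * c * hf n H a b"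
  unfolding hf_def sum_distrib_left by (intro sum.cong refl, insert assms, auto simp: mult_ac)

lemma real_bound: fixes a b \<alpha> \<rho> \<sigma> :: real
  assumes r: "\<rho> > 0" and s: "\<sigma> \<ge> 0" and e1: "2 * a * \<alpha> = (a*a + b*b) * \<rho> + \<sigma>" and e2: "b * \<alpha> = 0"
    and i1: "\<sigma> + (a*a + b*b) * \<rho> - 2 * (a*a + b*b) * \<alpha> \<ge> 0"
    and i2: "\<sigma> + (a*a + b*b) * \<rho> + 2 * (a*a + b*b) * \<alpha> \<ge> 0"
  shows "b = 0 \<and> -1 \<le> a \<and> a \<le> 1"
proof (cases "\<alpha> = 0")
  case True
  then have "(a*a + b*b) * \<rho> + \<sigma> = 0" using e1 by simp
  moreover have "(a*a + b*b) * \<rho> \<ge> 0" using r by simp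
  ultimately have "(a*a + b*b) * \<rho> = 0" using s by linarith
  then have "a*a + b*b = 0" using r by simp
  then have "a = 0" "b = 0" by (auto simp: add_nonneg_eq_0_iff)
  then show ?thesis by simp
next
  case False
  then have b0: "b = 0" using e2 by simp
  have "2 * a * \<alpha> \<ge> 2 * (a*a) * \<alpha>" using e1 i1 b0 by simp
  moreover have "2 * a * \<alpha> \<ge> - (2 * (a*a) * \<alpha>)" using e1 i2 b0 by simp
  ultimately have t1: "a * a * \<alpha> \<le> a * \<alpha>" and t2: "- (a * a * \<alpha>) \<le> a * \<alpha>" by linarith+
  have h: "a * a * \<bar>\<alpha>\<bar> \<le> a * \<alpha>"
  proof (cases "\<alpha> \<ge> 0")
    case True then show ?thesis using t1 by (simp add: abs_of_nonneg)
  next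
    case False then have "\<bar>\<alpha>\<bar> = - \<alpha>" by simp
    then show ?thesis using t2 by simp
  qed
  have h2: "a * \<alpha> \<le> \<bar>a\<bar> * \<bar>\<alpha>\<bar>" by (metis abs_ge_self abs_mult)
  have "\<bar>a\<bar> * \<bar>a\<bar> * \<bar>\<alpha>\<bar> \<le> 1 * \<bar>a\<bar> * \<bar>\<alpha>\<bar>" using h h2 by (simp add: abs_mult_self_eq)
  then have "\<bar>a\<bar> * (\<bar>a\<bar> * \<bar>\<alpha>\<bar>) \<le> 1 * (\<bar>a\<bar> * \<bar>\<alpha>\<bar>)" by (simp add: mult.assoc)
  then have "\<bar>a\<bar> \<le> 1 \<or> \<bar>a\<bar> * \<bar>\<alpha>\<bar> \<le> 0"
    by (metis mult_le_cancel_right not_le)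
  moreover have "\<bar>a\<bar> * \<bar>\<alpha>\<bar> \<le> 0 \<Longrightarrow> \<bar>a\<bar> \<le> 1" using False by (simp add: mult_le_0_iff)
  ultimately have "\<bar>a\<bar> \<le> 1" by blast
  then show ?thesis using b0 by (auto simp: abs_le_iff)
qed

locale ctx =
  fixes d :: nat and A :: "complex mat"
  assumes A_carr: "A \<in> carrier_mat (2*d) (2*d)" and A_sym: "transpose_mat A = A"
    and A_pos: "pos_def_real (2*d) (map_mat Re A)"
begin

abbreviation "T \<equiv> theta d"
abbreviation "Rm \<equiv> map_mat (\<lambda>a. complex_of_real (Re a)) A"
abbreviation "Ym \<equiv> map_mat (\<lambda>a. complex_of_real (Im a)) A"
abbreviation "Ab \<equiv> conj_mat A"
abbreviation "M \<equiv> Mmat d Ab A"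
abbreviation "J \<equiv> Jmat d"

lemma Ab_carr[simp]: "Ab \<in> carrier_mat (2*d) (2*d)" using A_carr unfolding conj_mat_def by auto
lemma Rm_carr[simp]: "Rm \<in> carrier_mat (2*d) (2*d)" using A_carr by auto
lemma Ym_carr[simp]: "Ym \<in> carrier_mat (2*d) (2*d)" using A_carr by auto
lemma A_carr'[simp]: "A \<in> carrier_mat (2*d) (2*d)" using A_carr by auto
lemma A_dims[simp]: "dim_row A = 2*d" "dim_col A = 2*d" using carrier_matD[OF A_carr] by auto

lemma A_idx_sym: "i < 2*d \<Longrightarrow> j < 2*d \<Longrightarrow> A $$ (i,j) = A $$ (j,i)"
  using arg_cong[OF A_sym, of "\<lambda>B. B $$ (j,i)"] A_carr by auto

lemma Rm_idx: "i < 2*d \<Longrightarrow> j < 2*d \<Longrightarrow> Rm $$ (i,j) = complex_of_real (Re (A $$ (i,j)))"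
  by simp
lemma Ym_idx: "i < 2*d \<Longrightarrow> j < 2*d \<Longrightarrow> Ym $$ (i,j) = complex_of_real (Im (A $$ (i,j)))"
  by simp
lemma Ab_idx: "i < 2*d \<Longrightarrow> j < 2*d \<Longrightarrow> Ab $$ (i,j) = cnj (A $$ (i,j))"
  unfolding conj_mat_def by simp

lemma Rm_herm: assumes "i < 2*d" "j < 2*d" shows "Rm $$ (i,j) = cnj (Rm $$ (j,i))"
proof -
  have "A $$ (i,j) = A $$ (j,i)" by (rule A_idx_sym[OF assms])
  then show ?thesis unfolding Rm_idx[OF assms] Rm_idx[OF assms(2,1)] by simp
qed
lemma Ym_herm: assumes "i < 2*d" "j < 2*d" shows "Ym $$ (i,j) = cnj (Ym $$ (j,i))"
proof -
  have "A $$ (i,j) = A $$ (j,i)" by (rule A_idx_sym[OF assms])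
  then show ?thesis unfolding Ym_idx[OF assms] Ym_idx[OF assms(2,1)] by simp
qed
lemma T_herm: "i < 2*d \<Longrightarrow> j < 2*d \<Longrightarrow> T $$ (i,j) = cnj (T $$ (j,i))"
  by (rule theta_herm)

lemma A_entry: assumes "i < 2*d" "j < 2*d"
  shows "A $$ (i,j) = Rm $$ (i,j) + \<i> * Ym $$ (i,j)" "Ab $$ (i,j) = Rm $$ (i,j) - \<i> * Ym $$ (i,j)"
  unfolding Rm_idx[OF assms] Ym_idx[OF assms] Ab_idx[OF assms] by (simp_all add: complex_eq_iff)

lemma A_split: assumes v: "v \<in> carrier_vec (2*d)" and i: "i < 2*d"
  shows "(A *\<^sub>v v) $ i = (Rm *\<^sub>v v) $ i + \<i> * (Ym *\<^sub>v v) $ i"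
    "(Ab *\<^sub>v v) $ i = (Rm *\<^sub>v v) $ i - \<i> * (Ym *\<^sub>v v) $ i"
proof -
  have "(\<Sum>j<2*d. A $$ (i,j) * v $ j) = (\<Sum>j<2*d. Rm $$ (i,j) * v $ j + \<i> * (Ym $$ (i,j) * v $ j))"
  proof (rule sum.cong[OF refl])
    fix j assume "j \<in> {..<2*d}" then have j: "j < 2*d" by simp
    show "A $$ (i,j) * v $ j = Rm $$ (i,j) * v $ j + \<i> * (Ym $$ (i,j) * v $ j)"
      unfolding A_entry(1)[OF i j] by (simp add: algebra_simps)
  qed
  then show "(A *\<^sub>v v) $ i = (Rm *\<^sub>v v) $ i + \<i> * (Ym *\<^sub>v v) $ i"
    unfolding mult_mat_vec_sum[OF A_carr' v i] mult_mat_vec_sum[OF Rm_carr v i] mult_mat_vec_sum[OF Ym_carr v i]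
    by (simp add: sum.distrib sum_distrib_left)
  have "(\<Sum>j<2*d. Ab $$ (i,j) * v $ j) = (\<Sum>j<2*d. Rm $$ (i,j) * v $ j - \<i> * (Ym $$ (i,j) * v $ j))"
  proof (rule sum.cong[OF refl])
    fix j assume "j \<in> {..<2*d}" then have j: "j < 2*d" by simp
    show "Ab $$ (i,j) * v $ j = Rm $$ (i,j) * v $ j - \<i> * (Ym $$ (i,j) * v $ j)"
      unfolding A_entry(2)[OF i j] by (simp add: algebra_simps)
  qed
  then show "(Ab *\<^sub>v v) $ i = (Rm *\<^sub>v v) $ i - \<i> * (Ym *\<^sub>v v) $ i"
    unfolding mult_mat_vec_sum[OF Ab_carr v i] mult_mat_vec_sum[OF Rm_carr v i] mult_mat_vec_sum[OF Ym_carr v i]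
    by (simp add: sum_subtractf sum_distrib_left)
qed

lemma J_carr[simp]: "J \<in> carrier_mat (4*d) (2*d)" unfolding Jmat_def by auto
lemma J_dims[simp]: "dim_row J = 4*d" "dim_col J = 2*d" unfolding Jmat_def by auto

lemma J_mult: assumes x: "x \<in> carrier_vec (2*d)" shows "J *\<^sub>v x = (-x) @\<^sub>v x"
proof (rule eq_vecI)
  fix i assume "i < dim_vec ((-x) @\<^sub>v x)"
  then have i: "i < 4*d" using x by auto
  have "(J *\<^sub>v x) $ i = (\<Sum>j<2*d. J $$ (i,j) * x $ j)" by (rule mult_mat_vec_sum[OF J_carr x i])
  also have "\<dots> = (\<Sum>j<2*d. if i < 2*d then (if j = i then - x $ i else 0) else (if j = i - 2*d then x $ (i - 2*d) else 0))"
  proof (rule sum.cong[OF refl])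
    fix j assume "j \<in> {..<2*d}"
    then have j: "j < 2*d" by auto
    have Jt: "J $$ (i,j) = (if j = i then -1 else if i = j + 2*d then 1 else 0)"
      using i j unfolding Jmat_def by auto
    show "J $$ (i,j) * x $ j = (if i < 2*d then (if j = i then - x $ i else 0) else (if j = i - 2*d then x $ (i - 2*d) else 0))"
      using i j unfolding Jt by auto
  qed
  also have "\<dots> = (if i < 2*d then - x $ i else x $ (i - 2*d))"
    using i by auto
  also have "\<dots> = ((-x) @\<^sub>v x) $ i" using i x by auto
  finally show "(J *\<^sub>v x) $ i = ((-x) @\<^sub>v x) $ i" .
next
  show "dim_vec (J *\<^sub>v x) = dim_vec ((-x) @\<^sub>v x)" using x by auto
qed

lemma JT_mult: assumes v1: "v1 \<in> carrier_vec (2*d)" and v2: "v2 \<in> carrier_vec (2*d)"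
  shows "transpose_mat J *\<^sub>v (v1 @\<^sub>v v2) = v2 - v1"
proof (rule eq_vecI)
  fix i assume "i < dim_vec (v2 - v1)"
  then have i: "i < 2*d" using v2 v1 by auto
  have c: "v1 @\<^sub>v v2 \<in> carrier_vec (4*d)" using v1 v2 unfolding carrier_vec_def by auto
  have "(transpose_mat J *\<^sub>v (v1 @\<^sub>v v2)) $ i = (\<Sum>j<4*d. transpose_mat J $$ (i,j) * (v1 @\<^sub>v v2) $ j)"
    by (rule mult_mat_vec_sum[OF _ c i], auto)
  also have "\<dots> = (\<Sum>j<4*d. (if j = i then - v1 $ i else 0) + (if j = i + 2*d then v2 $ i else 0))"
  proof (rule sum.cong[OF refl])
    fix j assume "j \<in> {..<4*d}"
    then have j: "j < 4*d" by auto
    have Jt: "transpose_mat J $$ (i,j) = (if j = i then -1 else if j = i + 2*d then 1 else 0)"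
      using i j unfolding Jmat_def by auto
    show "transpose_mat J $$ (i,j) * (v1 @\<^sub>v v2) $ j = (if j = i then - v1 $ i else 0) + (if j = i + 2*d then v2 $ i else 0)"
    proof (cases "j < 2*d")
      case True thus ?thesis unfolding Jt using i v1 v2 by auto
    next
      case False thus ?thesis unfolding Jt using i j v1 v2 by auto
    qed
  qed
  also have "\<dots> = (v2 - v1) $ i" using i v1 v2 by (simp add: sum.distrib)
  finally show "(transpose_mat J *\<^sub>v (v1 @\<^sub>v v2)) $ i = (v2 - v1) $ i" .
next
  show "dim_vec (transpose_mat J *\<^sub>v (v1 @\<^sub>v v2)) = dim_vec (v2 - v1)" using v1 v2 by simp
qed


lemma T_carr[simp]: "T \<in> carrier_mat (2*d) (2*d)" by simp

lemma Tv_carr[simp]: "v \<in> carrier_vec (2*d) \<Longrightarrow> T *\<^sub>v v \<in> carrier_vec (2*d)"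
  by (rule mult_mat_vec_carrier[OF T_carr])
lemma Av_carr[simp]: "v \<in> carrier_vec (2*d) \<Longrightarrow> A *\<^sub>v v \<in> carrier_vec (2*d)"
  by (rule mult_mat_vec_carrier[OF A_carr'])
lemma Abv_carr[simp]: "v \<in> carrier_vec (2*d) \<Longrightarrow> Ab *\<^sub>v v \<in> carrier_vec (2*d)"
  by (rule mult_mat_vec_carrier[OF Ab_carr])

lemma M_mult: assumes u: "u \<in> carrier_vec (2*d)" and w: "w \<in> carrier_vec (2*d)"
  shows "M *\<^sub>v ((T *\<^sub>v u) @\<^sub>v (T *\<^sub>v w)) = (T *\<^sub>v (Ab *\<^sub>v u) + - w) @\<^sub>v (u + T *\<^sub>v (A *\<^sub>v w))"
proof -
  have c1: "T * Ab * T \<in> carrier_mat (2*d) (2*d)" by (rule mult_carrier_mat[OF mult_carrier_mat[OF T_carr Ab_carr] T_carr])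
  have c2: "- T \<in> carrier_mat (2*d) (2*d)" by (rule uminus_carrier_mat[OF T_carr])
  have c4: "T * A * T \<in> carrier_mat (2*d) (2*d)" by (rule mult_carrier_mat[OF mult_carrier_mat[OF T_carr A_carr'] T_carr])
  have "M *\<^sub>v ((T *\<^sub>v u) @\<^sub>v (T *\<^sub>v w)) =
    ((T * Ab * T) *\<^sub>v (T *\<^sub>v u) + (- T) *\<^sub>v (T *\<^sub>v w)) @\<^sub>v (T *\<^sub>v (T *\<^sub>v u) + (T * A * T) *\<^sub>v (T *\<^sub>v w))"
    unfolding Mmat_def by (rule four_block_mat_mult_vec[OF c1 c2 T_carr c4 Tv_carr[OF u] Tv_carr[OF w]])
  also have "(T * Ab * T) *\<^sub>v (T *\<^sub>v u) = T *\<^sub>v (Ab *\<^sub>v u)"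
  proof -
    have "(T * Ab * T) *\<^sub>v (T *\<^sub>v u) = (T * Ab) *\<^sub>v (T *\<^sub>v (T *\<^sub>v u))"
      by (rule assoc_mult_mat_vec[OF mult_carrier_mat[OF T_carr Ab_carr] T_carr Tv_carr[OF u]])
    also have "\<dots> = T *\<^sub>v (Ab *\<^sub>v (T *\<^sub>v (T *\<^sub>v u)))"
      by (rule assoc_mult_mat_vec[OF T_carr Ab_carr Tv_carr[OF Tv_carr[OF u]]])
    finally have "(T * Ab * T) *\<^sub>v (T *\<^sub>v u) = T *\<^sub>v (Ab *\<^sub>v (T *\<^sub>v (T *\<^sub>v u)))" .
    then show ?thesis using theta_theta_vec[OF u] by simp
  qed
  also have "(- T) *\<^sub>v (T *\<^sub>v w) = - w"
    using theta_theta_vec[OF w] w by (subst uminus_mult_mat_vec, auto)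
  also have "T *\<^sub>v (T *\<^sub>v u) = u" by (rule theta_theta_vec[OF u])
  also have "(T * A * T) *\<^sub>v (T *\<^sub>v w) = T *\<^sub>v (A *\<^sub>v w)"
  proof -
    have "(T * A * T) *\<^sub>v (T *\<^sub>v w) = (T * A) *\<^sub>v (T *\<^sub>v (T *\<^sub>v w))"
      by (rule assoc_mult_mat_vec[OF mult_carrier_mat[OF T_carr A_carr'] T_carr Tv_carr[OF w]])
    also have "\<dots> = T *\<^sub>v (A *\<^sub>v (T *\<^sub>v (T *\<^sub>v w)))"
      by (rule assoc_mult_mat_vec[OF T_carr A_carr' Tv_carr[OF Tv_carr[OF w]]])
    finally have "(T * A * T) *\<^sub>v (T *\<^sub>v w) = T *\<^sub>v (A *\<^sub>v (T *\<^sub>v (T *\<^sub>v w)))" .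
    then show ?thesis using theta_theta_vec[OF w] by simp
  qed
  finally show ?thesis .
qed

context
  fixes u w x
  assumes u: "u \<in> carrier_vec (2*d)" and w: "w \<in> carrier_vec (2*d)" and x: "x \<in> carrier_vec (2*d)"
    and Mv: "M *\<^sub>v ((T *\<^sub>v u) @\<^sub>v (T *\<^sub>v w)) = J *\<^sub>v x"
begin

lemma E12: "T *\<^sub>v (Ab *\<^sub>v u) + - w = - x" "u + T *\<^sub>v (A *\<^sub>v w) = x"
proof -
  have "(T *\<^sub>v (Ab *\<^sub>v u) + - w) @\<^sub>v (u + T *\<^sub>v (A *\<^sub>v w)) = (-x) @\<^sub>v x"
    using Mv unfolding M_mult[OF u w] J_mult[OF x] .
  moreover have "T *\<^sub>v (Ab *\<^sub>v u) + - w \<in> carrier_vec (2*d)" using u w by simp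
  moreover have "- x \<in> carrier_vec (2*d)" using x by simp
  ultimately show "T *\<^sub>v (Ab *\<^sub>v u) + - w = - x" "u + T *\<^sub>v (A *\<^sub>v w) = x"
    using append_vec_eq by blast+
qed

lemma F1: assumes i: "i < 2*d" shows "(Ab *\<^sub>v u) $ i = (T *\<^sub>v w) $ i - (T *\<^sub>v x) $ i"
proof -
  have e: "T *\<^sub>v (Ab *\<^sub>v u) = w - x"
  proof (rule eq_vecI)
    fix j assume "j < dim_vec (w - x)"
    then have j: "j < 2*d" using x by simp
    from arg_cong[OF E12(1), of "\<lambda>v. v $ j"] show "(T *\<^sub>v (Ab *\<^sub>v u)) $ j = (w - x) $ j"
      using j u w x by (simp add: algebra_simps)
  qed (use x u in simp)
  have "Ab *\<^sub>v u = T *\<^sub>v (w - x)"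
    using arg_cong[OF e, of "\<lambda>v. T *\<^sub>v v"] theta_theta_vec[OF Abv_carr[OF u]] by simp
  then show ?thesis using mv_minus[OF T_carr w x i] by simp
qed

lemma F2: assumes i: "i < 2*d" shows "(A *\<^sub>v w) $ i = (T *\<^sub>v x) $ i - (T *\<^sub>v u) $ i"
proof -
  have e: "T *\<^sub>v (A *\<^sub>v w) = x - u"
  proof (rule eq_vecI)
    fix j assume "j < dim_vec (x - u)"
    then have j: "j < 2*d" using u by simp
    from arg_cong[OF E12(2), of "\<lambda>v. v $ j"] show "(T *\<^sub>v (A *\<^sub>v w)) $ j = (x - u) $ j"
      using j u w x by (simp add: algebra_simps)
  qed (use x u in simp)
  have "A *\<^sub>v w = T *\<^sub>v (x - u)"
    using arg_cong[OF e, of "\<lambda>v. T *\<^sub>v v"] theta_theta_vec[OF Av_carr[OF w]] by simp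
  then show ?thesis using mv_minus[OF T_carr x u i] by simp
qed

lemma eqI: assumes i: "i < 2*d"
  shows "(Rm *\<^sub>v (w + u)) $ i = (T *\<^sub>v (w - u)) $ i - \<i> * (Ym *\<^sub>v (w - u)) $ i"
proof -
  have 1: "(Rm *\<^sub>v u) $ i = (T *\<^sub>v w) $ i - (T *\<^sub>v x) $ i + \<i> * (Ym *\<^sub>v u) $ i"
    using F1[OF i] A_split(2)[OF u i] by (simp add: algebra_simps)
  have 2: "(Rm *\<^sub>v w) $ i = (T *\<^sub>v x) $ i - (T *\<^sub>v u) $ i - \<i> * (Ym *\<^sub>v w) $ i"
    using F2[OF i] A_split(1)[OF w i] by (simp add: algebra_simps)
  show ?thesis
    unfolding mv_add[OF Rm_carr w u i] mv_minus[OF T_carr w u i] mv_minus[OF Ym_carr w u i] 1 2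
    by (simp add: algebra_simps)
qed

lemma eqII: assumes i: "i < 2*d"
  shows "(Rm *\<^sub>v (w - u)) $ i + (T *\<^sub>v (w + u)) $ i + \<i> * (Ym *\<^sub>v (w + u)) $ i = 2 * (T *\<^sub>v x) $ i"
proof -
  have 1: "(Rm *\<^sub>v u) $ i = (T *\<^sub>v w) $ i - (T *\<^sub>v x) $ i + \<i> * (Ym *\<^sub>v u) $ i"
    using F1[OF i] A_split(2)[OF u i] by (simp add: algebra_simps)
  have 2: "(Rm *\<^sub>v w) $ i = (T *\<^sub>v x) $ i - (T *\<^sub>v u) $ i - \<i> * (Ym *\<^sub>v w) $ i"
    using F2[OF i] A_split(1)[OF w i] by (simp add: algebra_simps)
  show ?thesis
    unfolding mv_add[OF T_carr w u i] mv_minus[OF Rm_carr w u i] mv_add[OF Ym_carr w u i] 1 2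
    by (simp add: algebra_simps)
qed


lemma pc: "w - u \<in> carrier_vec (2*d)" using u w by simp
lemma qc: "w + u \<in> carrier_vec (2*d)" using u w by simp

lemma form_a: "2 * (\<Sum>i<2*d. cnj ((w - u) $ i) * (T *\<^sub>v x) $ i) =
  hf (2*d) Rm (w - u) (w - u) + hf (2*d) Rm (w + u) (w + u)"
proof -
  let ?p = "w - u" and ?q = "w + u" and ?n = "2*d"
  have s1: "2 * (\<Sum>i<?n. cnj (?p $ i) * (T *\<^sub>v x) $ i) = hf ?n Rm ?p ?p + hf ?n T ?p ?q + \<i> * hf ?n Ym ?p ?q"
  proof -
    have "(\<Sum>i<?n. 2 * (cnj (?p $ i) * (T *\<^sub>v x) $ i)) = (\<Sum>i<?n. cnj (?p $ i) * (Rm *\<^sub>v ?p) $ i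
       + cnj (?p $ i) * (T *\<^sub>v ?q) $ i + \<i> * (cnj (?p $ i) * (Ym *\<^sub>v ?q) $ i))"
    proof (rule sum.cong[OF refl])
      fix i assume "i \<in> {..<?n}" then have i: "i < ?n" by simp
      have "2 * (cnj (?p $ i) * (T *\<^sub>v x) $ i) = cnj (?p $ i) * (2 * (T *\<^sub>v x) $ i)" by simp
      also have "\<dots> = cnj (?p $ i) * ((Rm *\<^sub>v ?p) $ i + (T *\<^sub>v ?q) $ i + \<i> * (Ym *\<^sub>v ?q) $ i)"
        unfolding eqII[OF i] ..
      finally show "2 * (cnj (?p $ i) * (T *\<^sub>v x) $ i) = cnj (?p $ i) * (Rm *\<^sub>v ?p) $ i
       + cnj (?p $ i) * (T *\<^sub>v ?q) $ i + \<i> * (cnj (?p $ i) * (Ym *\<^sub>v ?q) $ i)"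
        by (simp add: algebra_simps)
    qed
    then show ?thesis
      unfolding hf_alt[OF Rm_carr pc] hf_alt[OF T_carr qc] hf_alt[OF Ym_carr qc]
      by (simp add: sum.distrib sum_distrib_left)
  qed
  have s2: "hf ?n Rm ?q ?q = hf ?n T ?q ?p - \<i> * hf ?n Ym ?q ?p"
  proof -
    have "(\<Sum>i<?n. cnj (?q $ i) * (Rm *\<^sub>v ?q) $ i) = (\<Sum>i<?n. cnj (?q $ i) * (T *\<^sub>v ?p) $ i
        - \<i> * (cnj (?q $ i) * (Ym *\<^sub>v ?p) $ i))"
    proof (rule sum.cong[OF refl])
      fix i assume "i \<in> {..<?n}" then have i: "i < ?n" by simp
      show "cnj (?q $ i) * (Rm *\<^sub>v ?q) $ i = cnj (?q $ i) * (T *\<^sub>v ?p) $ i - \<i> * (cnj (?q $ i) * (Ym *\<^sub>v ?p) $ i)"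
        unfolding eqI[OF i] by (simp add: algebra_simps)
    qed
    then show ?thesis
      unfolding hf_alt[OF Rm_carr qc] hf_alt[OF T_carr pc] hf_alt[OF Ym_carr pc]
      by (simp add: sum_subtractf sum_distrib_left)
  qed
  have a1: "hf ?n T ?p ?q = cnj (hf ?n T ?q ?p)" by (rule hf_adj, rule T_herm)
  have a2: "hf ?n Ym ?p ?q = cnj (hf ?n Ym ?q ?p)" by (rule hf_adj, rule Ym_herm)
  have a3: "hf ?n Rm ?q ?q = cnj (hf ?n Rm ?q ?q)" by (rule hf_adj, rule Rm_herm)
  have "cnj (hf ?n Rm ?q ?q) = cnj (hf ?n T ?q ?p - \<i> * hf ?n Ym ?q ?p)" by (simp only: s2)
  then have "hf ?n Rm ?q ?q = cnj (hf ?n T ?q ?p) + \<i> * cnj (hf ?n Ym ?q ?p)" using a3 by simp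
  then have "hf ?n Rm ?q ?q = hf ?n T ?p ?q + \<i> * hf ?n Ym ?p ?q" unfolding a1 a2 .
  then show ?thesis unfolding s1 by simp
qed

lemma form_b: "hf (2*d) Rm ((w + u) - complex_of_real c \<cdot>\<^sub>v (w - u)) ((w + u) - complex_of_real c \<cdot>\<^sub>v (w - u)) =
  hf (2*d) Rm (w + u) (w + u) + complex_of_real (c * c) * hf (2*d) Rm (w - u) (w - u)
   - 2 * complex_of_real c * hf (2*d) T (w - u) (w - u)"
proof -
  let ?p = "w - u" and ?q = "w + u" and ?n = "2*d"
  have s3: "hf ?n Rm ?p ?q = hf ?n T ?p ?p - \<i> * hf ?n Ym ?p ?p"
  proof -
    have "(\<Sum>i<?n. cnj (?p $ i) * (Rm *\<^sub>v ?q) $ i) = (\<Sum>i<?n. cnj (?p $ i) * (T *\<^sub>v ?p) $ i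
        - \<i> * (cnj (?p $ i) * (Ym *\<^sub>v ?p) $ i))"
    proof (rule sum.cong[OF refl])
      fix i assume "i \<in> {..<?n}" then have i: "i < ?n" by simp
      show "cnj (?p $ i) * (Rm *\<^sub>v ?q) $ i = cnj (?p $ i) * (T *\<^sub>v ?p) $ i - \<i> * (cnj (?p $ i) * (Ym *\<^sub>v ?p) $ i)"
        unfolding eqI[OF i] by (simp add: algebra_simps)
    qed
    then show ?thesis
      unfolding hf_alt[OF Rm_carr qc] hf_alt[OF T_carr pc] hf_alt[OF Ym_carr pc]
      by (simp add: sum_subtractf sum_distrib_left)
  qed
  have s4: "hf ?n Rm ?q ?p = cnj (hf ?n Rm ?p ?q)" by (rule hf_adj, rule Rm_herm)
  have r1: "cnj (hf ?n T ?p ?p) = hf ?n T ?p ?p" using hf_adj[of ?n T ?p ?p, OF T_herm] by simp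
  have r2: "cnj (hf ?n Ym ?p ?p) = hf ?n Ym ?p ?p" using hf_adj[of ?n Ym ?p ?p, OF Ym_herm] by simp
  have sum: "hf ?n Rm ?q ?p + hf ?n Rm ?p ?q = 2 * hf ?n T ?p ?p"
    unfolding s4 s3 by (simp add: r1 r2)
  have "hf ?n Rm (?q - complex_of_real c \<cdot>\<^sub>v ?p) (?q - complex_of_real c \<cdot>\<^sub>v ?p) =
    hf ?n Rm ?q ?q - complex_of_real c * (hf ?n Rm ?q ?p + hf ?n Rm ?p ?q) + complex_of_real (c * c) * hf ?n Rm ?p ?p"
    unfolding hf_expand[OF qc pc] by (simp add: algebra_simps)
  then show ?thesis unfolding sum by simp
qed

lemma form_zero: assumes "Re (hf (2*d) Rm (w - u) (w - u)) = 0" "Re (hf (2*d) Rm (w + u) (w + u)) = 0"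
  shows "u = 0\<^sub>v (2*d)" "w = 0\<^sub>v (2*d)"
proof -
  have p0: "w - u = 0\<^sub>v (2*d)" by (rule re_form_pos(2)[OF A_carr' A_pos pc assms(1)])
  have q0: "w + u = 0\<^sub>v (2*d)" by (rule re_form_pos(2)[OF A_carr' A_pos qc assms(2)])
  have "\<And>i. i < 2*d \<Longrightarrow> u $ i = 0 \<and> w $ i = 0"
  proof -
    fix i assume i: "i < 2*d"
    have "w $ i - u $ i = 0" using arg_cong[OF p0, of "\<lambda>v. v $ i"] i u by simp
    moreover have "w $ i + u $ i = 0" using arg_cong[OF q0, of "\<lambda>v. v $ i"] i u by simp
    ultimately show "u $ i = 0 \<and> w $ i = 0" by (simp add: algebra_simps)
  qed
  then show "u = 0\<^sub>v (2*d)" "w = 0\<^sub>v (2*d)" using u w by (auto intro!: eq_vecI)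
qed

end


lemma M_carr[simp]: "M \<in> carrier_mat (4*d) (4*d)"
proof -
  have "M \<in> carrier_mat (2*d + 2*d) (2*d + 2*d)"
    unfolding Mmat_def by (rule four_block_carrier_mat[OF mult_carrier_mat[OF mult_carrier_mat[OF T_carr Ab_carr] T_carr]
      mult_carrier_mat[OF mult_carrier_mat[OF T_carr A_carr'] T_carr]])
  then show ?thesis by simp
qed

lemma M_dims[simp]: "dim_row M = 4*d" "dim_col M = 4*d" using carrier_matD[OF M_carr] by auto

lemma decomp: assumes v: "v \<in> carrier_vec (4*d)"
  shows "\<exists>u w. u \<in> carrier_vec (2*d) \<and> w \<in> carrier_vec (2*d) \<and> v = (T *\<^sub>v u) @\<^sub>v (T *\<^sub>v w)"
proof -
  have v': "v \<in> carrier_vec (2*d + 2*d)" using v by simp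
  let ?u = "T *\<^sub>v vec_first v (2*d)" and ?w = "T *\<^sub>v vec_last v (2*d)"
  have "T *\<^sub>v ?u = vec_first v (2*d)" by (rule theta_theta_vec, simp)
  moreover have "T *\<^sub>v ?w = vec_last v (2*d)" by (rule theta_theta_vec, simp)
  ultimately have "v = (T *\<^sub>v ?u) @\<^sub>v (T *\<^sub>v ?w)" using vec_first_last_append[OF v'] by simp
  then show ?thesis by (intro exI[of _ ?u] exI[of _ ?w], auto)
qed

lemma hf_Rm_props: assumes z: "z \<in> carrier_vec (2*d)"
  shows "hf (2*d) Rm z z = complex_of_real (Re (hf (2*d) Rm z z))" "Re (hf (2*d) Rm z z) \<ge> 0"
proof -
  have "hf (2*d) Rm z z \<in> \<real>" by (rule hf_real, rule Rm_herm)
  then show "hf (2*d) Rm z z = complex_of_real (Re (hf (2*d) Rm z z))" by (simp add: complex_is_Real_iff complex_eq_iff)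
  show "Re (hf (2*d) Rm z z) \<ge> 0" by (rule re_form_pos(1)[OF A_carr' A_pos z])
qed

lemma zero_from_forms: assumes u: "u \<in> carrier_vec (2*d)" and w: "w \<in> carrier_vec (2*d)"
  and x: "x \<in> carrier_vec (2*d)" and Mv: "M *\<^sub>v ((T *\<^sub>v u) @\<^sub>v (T *\<^sub>v w)) = J *\<^sub>v x"
  and z: "Re (hf (2*d) Rm (w - u) (w - u) + hf (2*d) Rm (w + u) (w + u)) = 0"
  shows "u = 0\<^sub>v (2*d)" "w = 0\<^sub>v (2*d)"
proof -
  have p: "w - u \<in> carrier_vec (2*d)" and q: "w + u \<in> carrier_vec (2*d)" using u w by auto
  have "Re (hf (2*d) Rm (w - u) (w - u)) = 0" "Re (hf (2*d) Rm (w + u) (w + u)) = 0"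
    using z hf_Rm_props(2)[OF p] hf_Rm_props(2)[OF q] by auto
  from form_zero[OF u w x Mv this] show "u = 0\<^sub>v (2*d)" "w = 0\<^sub>v (2*d)" by auto
qed

lemma M_inj: assumes v: "v \<in> carrier_vec (4*d)" and Mv: "M *\<^sub>v v = 0\<^sub>v (4*d)"
  shows "v = 0\<^sub>v (4*d)"
proof -
  obtain u w where u: "u \<in> carrier_vec (2*d)" and w: "w \<in> carrier_vec (2*d)" and vd: "v = (T *\<^sub>v u) @\<^sub>v (T *\<^sub>v w)"
    using decomp[OF v] by blast
  have x0: "(0\<^sub>v (2*d) :: complex vec) \<in> carrier_vec (2*d)" by simp
  have J0: "J *\<^sub>v 0\<^sub>v (2*d) = 0\<^sub>v (4*d)" by (rule eq_vecI, auto simp: mult_mat_vec_sum[OF J_carr x0])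
  have Mv': "M *\<^sub>v ((T *\<^sub>v u) @\<^sub>v (T *\<^sub>v w)) = J *\<^sub>v 0\<^sub>v (2*d)" using Mv vd J0 by simp
  have T0: "T *\<^sub>v 0\<^sub>v (2*d) = 0\<^sub>v (2*d)" by (rule eq_vecI, auto simp: mult_mat_vec_sum[OF T_carr x0])
  have "2 * (\<Sum>i<2*d. cnj ((w - u) $ i) * (T *\<^sub>v 0\<^sub>v (2*d)) $ i) = 0" unfolding T0 by simp
  then have "Re (hf (2*d) Rm (w - u) (w - u) + hf (2*d) Rm (w + u) (w + u)) = 0"
    unfolding form_a[OF u w x0 Mv'] by simp
  from zero_from_forms[OF u w x0 Mv' this] have "u = 0\<^sub>v (2*d)" "w = 0\<^sub>v (2*d)" .
  then have "v = (T *\<^sub>v 0\<^sub>v (2*d)) @\<^sub>v (T *\<^sub>v 0\<^sub>v (2*d))" using vd by simp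
  then have "v = 0\<^sub>v (2*d) @\<^sub>v 0\<^sub>v (2*d)" unfolding T0 .
  then show ?thesis by (auto intro!: eq_vecI)
qed

lemma M_det: "det M \<noteq> 0"
  using det_0_iff_vec_prod_zero[OF M_carr] M_inj by blast

abbreviation "Z \<equiv> mat_inv M"

lemma Z_props: "Z \<in> carrier_mat (4*d) (4*d)" "M * Z = 1\<^sub>m (4*d)" "Z * M = 1\<^sub>m (4*d)"
proof -
  have "M \<in> Units (ring_mat TYPE(complex) (4*d) ())" by (rule det_non_zero_imp_unit[OF M_carr M_det])
  then obtain B where B: "B \<in> carrier_mat (4*d) (4*d)" "B * M = 1\<^sub>m (4*d)" "M * B = 1\<^sub>m (4*d)"
    unfolding Units_def ring_mat_def by auto
  have "inverts_mat M B \<and> inverts_mat B M" unfolding inverts_mat_def using B by auto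
  then have inv: "inverts_mat M Z \<and> inverts_mat Z M" unfolding mat_inv_def by (rule someI)
  then have MZ: "M * Z = 1\<^sub>m (4*d)" unfolding inverts_mat_def by simp
  have ZM: "Z * M = 1\<^sub>m (dim_row Z)" using inv unfolding inverts_mat_def by simp
  have "dim_col Z = 4*d" using arg_cong[OF MZ, of dim_col] by simp
  moreover have "dim_row Z = 4*d" using arg_cong[OF ZM, of dim_col] by simp
  ultimately show Zc: "Z \<in> carrier_mat (4*d) (4*d)" by auto
  show "M * Z = 1\<^sub>m (4*d)" by (rule MZ)
  show "Z * M = 1\<^sub>m (4*d)" using ZM Zc by simp
qed

abbreviation "S \<equiv> sharp d Ab A"

lemma S_def': "S = transpose_mat J * Z * J" unfolding sharp_def ..

lemma S_carr[simp]: "S \<in> carrier_mat (2*d) (2*d)"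
  unfolding S_def' by (rule mult_carrier_mat[OF mult_carrier_mat[OF _ Z_props(1)] J_carr], simp)

lemma S_apply: assumes x: "x \<in> carrier_vec (2*d)"
  shows "\<exists>u w. u \<in> carrier_vec (2*d) \<and> w \<in> carrier_vec (2*d) \<and>
     M *\<^sub>v ((T *\<^sub>v u) @\<^sub>v (T *\<^sub>v w)) = J *\<^sub>v x \<and> S *\<^sub>v x = T *\<^sub>v (w - u)"
proof -
  have Jx: "J *\<^sub>v x \<in> carrier_vec (4*d)" by (rule mult_mat_vec_carrier[OF J_carr x])
  let ?v = "Z *\<^sub>v (J *\<^sub>v x)"
  have v: "?v \<in> carrier_vec (4*d)" using Z_props(1) Jx by simp
  obtain u w where u: "u \<in> carrier_vec (2*d)" and w: "w \<in> carrier_vec (2*d)" and vd: "?v = (T *\<^sub>v u) @\<^sub>v (T *\<^sub>v w)"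
    using decomp[OF v] by blast
  have "M *\<^sub>v ?v = (M * Z) *\<^sub>v (J *\<^sub>v x)" by (rule assoc_mult_mat_vec[OF M_carr Z_props(1) Jx, symmetric])
  also have "\<dots> = J *\<^sub>v x" unfolding Z_props(2) using Jx by simp
  finally have Mv: "M *\<^sub>v ((T *\<^sub>v u) @\<^sub>v (T *\<^sub>v w)) = J *\<^sub>v x" unfolding vd .
  have JTc: "transpose_mat J \<in> carrier_mat (2*d) (4*d)" by simp
  have "S *\<^sub>v x = (transpose_mat J * Z) *\<^sub>v (J *\<^sub>v x)"
    unfolding S_def' by (rule assoc_mult_mat_vec[OF mult_carrier_mat[OF JTc Z_props(1)] J_carr x])
  also have "\<dots> = transpose_mat J *\<^sub>v (Z *\<^sub>v (J *\<^sub>v x))"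
    by (rule assoc_mult_mat_vec[OF JTc Z_props(1) Jx])
  also have "\<dots> = T *\<^sub>v w - T *\<^sub>v u" unfolding vd by (rule JT_mult, insert u w, auto)
  also have "\<dots> = T *\<^sub>v (w - u)" by (rule mult_minus_distrib_mat_vec[symmetric, OF T_carr w u])
  finally show ?thesis using u w Mv by blast
qed


lemma T_unit: assumes a: "a \<in> carrier_vec (2*d)" and b: "b \<in> carrier_vec (2*d)"
  shows "(\<Sum>i<2*d. cnj ((T *\<^sub>v a) $ i) * (T *\<^sub>v b) $ i) = (\<Sum>i<2*d. cnj (a $ i) * b $ i)"
proof -
  have "(\<Sum>i<2*d. cnj ((T *\<^sub>v a) $ i) * (T *\<^sub>v b) $ i) = hf (2*d) T (T *\<^sub>v a) b"
    by (rule hf_alt[OF T_carr b, symmetric])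
  also have "\<dots> = cnj (hf (2*d) T b (T *\<^sub>v a))" by (rule hf_adj, rule T_herm)
  also have "hf (2*d) T b (T *\<^sub>v a) = (\<Sum>i<2*d. cnj (b $ i) * a $ i)"
    unfolding hf_alt[OF T_carr Tv_carr[OF a]] theta_theta_vec[OF a] ..
  finally show ?thesis by (simp add: cnj_sum mult.commute)
qed

definition Q :: "complex vec \<Rightarrow> complex" where
  "Q x = (\<Sum>i<2*d. cnj ((S *\<^sub>v x) $ i) * x $ i)"

lemma Q_props: assumes x: "x \<in> carrier_vec (2*d)"
  shows "Q x \<in> \<real>" "Re (Q x) \<ge> 0" "Re (Q x) = 0 \<Longrightarrow> x = 0\<^sub>v (2*d)"
proof -
  obtain u w where u: "u \<in> carrier_vec (2*d)" and w: "w \<in> carrier_vec (2*d)"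
    and Mv: "M *\<^sub>v ((T *\<^sub>v u) @\<^sub>v (T *\<^sub>v w)) = J *\<^sub>v x" and Sx: "S *\<^sub>v x = T *\<^sub>v (w - u)"
    using S_apply[OF x] by blast
  have p: "w - u \<in> carrier_vec (2*d)" and q: "w + u \<in> carrier_vec (2*d)" using u w by auto
  have "Q x = (\<Sum>i<2*d. cnj ((T *\<^sub>v (w - u)) $ i) * (T *\<^sub>v (T *\<^sub>v x)) $ i)"
    unfolding Q_def Sx theta_theta_vec[OF x] ..
  also have "\<dots> = (\<Sum>i<2*d. cnj ((w - u) $ i) * (T *\<^sub>v x) $ i)"
    by (rule T_unit[OF p Tv_carr[OF x]])
  finally have "2 * Q x = hf (2*d) Rm (w - u) (w - u) + hf (2*d) Rm (w + u) (w + u)"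
    using form_a[OF u w x Mv] by simp
  then have Qe: "Q x = (complex_of_real (Re (hf (2*d) Rm (w - u) (w - u))) + complex_of_real (Re (hf (2*d) Rm (w + u) (w + u)))) / 2"
    using hf_Rm_props(1)[OF p] hf_Rm_props(1)[OF q] by (simp add: field_simps)
  show "Q x \<in> \<real>" unfolding Qe by simp
  show "Re (Q x) \<ge> 0" unfolding Qe using hf_Rm_props(2)[OF p] hf_Rm_props(2)[OF q] by simp
  assume "Re (Q x) = 0"
  then have "Re (hf (2*d) Rm (w - u) (w - u) + hf (2*d) Rm (w + u) (w + u)) = 0"
    unfolding Qe using hf_Rm_props(2)[OF p] hf_Rm_props(2)[OF q] by simp
  from zero_from_forms[OF u w x Mv this] have u0: "u = 0\<^sub>v (2*d)" and w0: "w = 0\<^sub>v (2*d)" .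
  have x0: "(0\<^sub>v (2*d) :: complex vec) \<in> carrier_vec (2*d)" by simp
  have T0: "T *\<^sub>v 0\<^sub>v (2*d) = 0\<^sub>v (2*d)" by (rule eq_vecI, auto simp: mult_mat_vec_sum[OF T_carr x0])
  have z4: "(T *\<^sub>v u) @\<^sub>v (T *\<^sub>v w) = 0\<^sub>v (4*d)" unfolding u0 w0 T0 by (auto intro!: eq_vecI)
  have z4c: "(0\<^sub>v (4*d) :: complex vec) \<in> carrier_vec (4*d)" by simp
  have M0: "M *\<^sub>v 0\<^sub>v (4*d) = 0\<^sub>v (4*d)" by (rule eq_vecI, auto simp: mult_mat_vec_sum[OF M_carr z4c])
  have "(-x) @\<^sub>v x = 0\<^sub>v (4*d)" using Mv unfolding z4 M0 J_mult[OF x] by simp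
  then have "\<And>i. i < 2*d \<Longrightarrow> x $ i = 0"
  proof -
    fix i assume i: "i < 2*d"
    assume e: "(-x) @\<^sub>v x = 0\<^sub>v (4*d)"
    have "((-x) @\<^sub>v x) $ (2*d + i) = x $ i" using i x by simp
    then show "x $ i = 0" unfolding e using i by simp
  qed
  then show "x = 0\<^sub>v (2*d)" using x by (auto intro!: eq_vecI)
qed

lemma Ab_sym: "transpose_mat Ab = Ab"
  by (rule eq_matI, auto simp: conj_mat_def A_idx_sym)

lemma TXT_sym: assumes X: "X \<in> carrier_mat (2*d) (2*d)" and Xs: "transpose_mat X = X"
  shows "transpose_mat (T * X * T) = T * X * T"
proof -
  have "transpose_mat (T * X * T) = transpose_mat T * transpose_mat (T * X)"
    by (rule transpose_mult[OF mult_carrier_mat[OF T_carr X] T_carr])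
  also have "transpose_mat (T * X) = transpose_mat X * transpose_mat T"
    by (rule transpose_mult[OF T_carr X])
  also have "transpose_mat T * (transpose_mat X * transpose_mat T) = T * (X * T)"
    unfolding Xs theta_transpose
  proof -
    have d1: "dim_col X = dim_row T" using X by simp
    have d2: "dim_col T = dim_row (X * T)" using X by simp
    have "X * - T = - (X * T)" by (rule uminus_mult_right_mat[OF d1])
    moreover have "- T * (- (X * T)) = - (T * (- (X * T)))" by (rule uminus_mult_left_mat, insert d2, simp)
    moreover have "T * (- (X * T)) = - (T * (X * T))" by (rule uminus_mult_right_mat[OF d2])
    ultimately show "- T * (X * - T) = T * (X * T)" by simp
  qed
  also have "\<dots> = T * X * T" by (rule assoc_mult_mat[OF T_carr X T_carr, symmetric])
  finally show ?thesis .
qed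

lemma M_sym: "transpose_mat M = M"
proof -
  have c1: "T * Ab * T \<in> carrier_mat (2*d) (2*d)" by (rule mult_carrier_mat[OF mult_carrier_mat[OF T_carr Ab_carr] T_carr])
  have c2: "- T \<in> carrier_mat (2*d) (2*d)" by (rule uminus_carrier_mat[OF T_carr])
  have c4: "T * A * T \<in> carrier_mat (2*d) (2*d)" by (rule mult_carrier_mat[OF mult_carrier_mat[OF T_carr A_carr'] T_carr])
  show ?thesis unfolding Mmat_def transpose_four_block_mat[OF c1 c2 T_carr c4]
    TXT_sym[OF Ab_carr Ab_sym] TXT_sym[OF A_carr' A_sym] transpose_uminus theta_transpose by simp
qed

lemma Z_sym: "transpose_mat Z = Z"
proof -
  have Zc: "Z \<in> carrier_mat (4*d) (4*d)" by (rule Z_props(1))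
  have ZTc: "transpose_mat Z \<in> carrier_mat (4*d) (4*d)" using Zc by simp
  have "transpose_mat (M * Z) = transpose_mat Z * transpose_mat M" by (rule transpose_mult[OF M_carr Zc])
  then have ZtM: "transpose_mat Z * M = 1\<^sub>m (4*d)" unfolding Z_props(2) M_sym by simp
  have "transpose_mat Z = transpose_mat Z * (M * Z)" unfolding Z_props(2) using ZTc by simp
  also have "\<dots> = (transpose_mat Z * M) * Z" by (rule assoc_mult_mat[OF ZTc M_carr Zc, symmetric])
  also have "\<dots> = Z" unfolding ZtM using Zc by simp
  finally show ?thesis .
qed

lemma S_sym: "transpose_mat S = S"
proof -
  have JTc: "transpose_mat J \<in> carrier_mat (2*d) (4*d)" by simp
  have Zc: "Z \<in> carrier_mat (4*d) (4*d)" by (rule Z_props(1))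
  have "transpose_mat S = transpose_mat J * transpose_mat (transpose_mat J * Z)"
    unfolding S_def' by (rule transpose_mult[OF mult_carrier_mat[OF JTc Zc] J_carr])
  also have "transpose_mat (transpose_mat J * Z) = transpose_mat Z * transpose_mat (transpose_mat J)"
    by (rule transpose_mult[OF JTc Zc])
  also have "transpose_mat J * (transpose_mat Z * transpose_mat (transpose_mat J)) = transpose_mat J * (Z * J)"
    unfolding Z_sym by simp
  also have "\<dots> = S" unfolding S_def' by (rule assoc_mult_mat[OF JTc Zc J_carr, symmetric])
  finally show ?thesis .
qed


lemma S_dims[simp]: "dim_row S = 2*d" "dim_col S = 2*d" using carrier_matD[OF S_carr] by auto

lemma S_entry_sym: "i < 2*d \<Longrightarrow> j < 2*d \<Longrightarrow> S $$ (i,j) = S $$ (j,i)"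
  using arg_cong[OF S_sym, of "\<lambda>B. B $$ (j,i)"] S_carr by auto

lemma S_unit: assumes j: "j < 2*d" and k: "k < 2*d"
  shows "(S *\<^sub>v unit_vec (2*d) j) $ k = S $$ (k,j)"
proof -
  have "(S *\<^sub>v unit_vec (2*d) j) $ k = (\<Sum>l<2*d. S $$ (k,l) * unit_vec (2*d) j $ l)"
    by (rule mult_mat_vec_sum[OF S_carr unit_vec_carrier k])
  also have "\<dots> = (\<Sum>l<2*d. if l = j then S $$ (k,j) else 0)"
    by (rule sum.cong[OF refl], insert j, auto)
  also have "\<dots> = S $$ (k,j)" using j by simp
  finally show ?thesis .
qed

lemma Q_unit: assumes j: "j < 2*d" shows "Q (unit_vec (2*d) j) = cnj (S $$ (j,j))"
proof -
  have "Q (unit_vec (2*d) j) = (\<Sum>k<2*d. if k = j then cnj (S $$ (j,j)) else 0)"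
    unfolding Q_def by (rule sum.cong[OF refl], insert j, auto simp: S_unit[OF j])
  also have "\<dots> = cnj (S $$ (j,j))" using j by simp
  finally show ?thesis .
qed

lemma Q_unit2: assumes i: "i < 2*d" and j: "j < 2*d" and ij: "i \<noteq> j"
  shows "Q (unit_vec (2*d) i + unit_vec (2*d) j) = cnj (S $$ (i,i) + S $$ (i,j)) + cnj (S $$ (j,i) + S $$ (j,j))"
proof -
  have "Q (unit_vec (2*d) i + unit_vec (2*d) j) = (\<Sum>k<2*d. (if k = i then cnj (S $$ (i,i) + S $$ (i,j)) else 0)
     + (if k = j then cnj (S $$ (j,i) + S $$ (j,j)) else 0))"
    unfolding Q_def
  proof (rule sum.cong[OF refl])
    fix k assume "k \<in> {..<2*d}" then have k: "k < 2*d" by simp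
    have "(S *\<^sub>v (unit_vec (2*d) i + unit_vec (2*d) j)) $ k = S $$ (k,i) + S $$ (k,j)"
      unfolding mv_add[OF S_carr unit_vec_carrier unit_vec_carrier k] S_unit[OF i k] S_unit[OF j k] ..
    then show "cnj ((S *\<^sub>v (unit_vec (2*d) i + unit_vec (2*d) j)) $ k) * (unit_vec (2*d) i + unit_vec (2*d) j) $ k =
      (if k = i then cnj (S $$ (i,i) + S $$ (i,j)) else 0) + (if k = j then cnj (S $$ (j,i) + S $$ (j,j)) else 0)"
      using k ij i j by auto
  qed
  also have "\<dots> = cnj (S $$ (i,i) + S $$ (i,j)) + cnj (S $$ (j,i) + S $$ (j,j))"
    using i j by (simp add: sum.distrib)
  finally show ?thesis .
qed

lemma S_real: "real_mat S"
  unfolding real_mat_def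
proof (intro allI impI)
  fix i j assume "i < dim_row S" "j < dim_col S"
  then have i: "i < 2*d" and j: "j < 2*d" by auto
  have d: "\<And>k. k < 2*d \<Longrightarrow> Im (S $$ (k,k)) = 0"
  proof -
    fix k assume k: "k < 2*d"
    have "Q (unit_vec (2*d) k) \<in> \<real>" by (rule Q_props(1), simp)
    then show "Im (S $$ (k,k)) = 0" unfolding Q_unit[OF k] by (simp add: complex_is_Real_iff)
  qed
  show "S $$ (i,j) \<in> \<real>"
  proof (cases "i = j")
    case True then show ?thesis using d[OF i] by (simp add: complex_is_Real_iff)
  next
    case False
    have "Q (unit_vec (2*d) i + unit_vec (2*d) j) \<in> \<real>" by (rule Q_props(1), simp)
    then have "Im (cnj (S $$ (i,i) + S $$ (i,j)) + cnj (S $$ (j,i) + S $$ (j,j))) = 0"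
      unfolding Q_unit2[OF i j False] by (simp add: complex_is_Real_iff)
    then have "Im (S $$ (i,j)) = 0" using d[OF i] d[OF j] S_entry_sym[OF i j] by simp
    then show ?thesis by (simp add: complex_is_Real_iff)
  qed
qed

lemma S_posdef: "pos_def_real (2*d) (map_mat Re S)"
  unfolding pos_def_real_def
proof (intro conjI ballI impI)
  show "map_mat Re S \<in> carrier_mat (2*d) (2*d)" by simp
  show "transpose_mat (map_mat Re S) = map_mat Re S"
    by (rule eq_matI, auto simp: S_entry_sym)
  fix x :: "real vec" assume x: "x \<in> carrier_vec (2*d)" and x0: "x \<noteq> 0\<^sub>v (2*d)"
  let ?xc = "map_vec complex_of_real x"
  have xc: "?xc \<in> carrier_vec (2*d)" using x by simp
  have "x \<bullet> (map_mat Re S *\<^sub>v x) = (\<Sum>i<2*d. x $ i * (\<Sum>j<2*d. Re (S $$ (i,j)) * x $ j))"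
  proof -
    have e: "\<And>i. i < 2*d \<Longrightarrow> (map_mat Re S *\<^sub>v x) $ i = (\<Sum>j<2*d. Re (S $$ (i,j)) * x $ j)"
      by (subst mult_mat_vec_sum[of _ "2*d" "2*d"], insert x, auto)
    show ?thesis unfolding scalar_prod_def using x by (auto simp: lessThan_atLeast0[symmetric] e intro!: sum.cong)
  qed
  also have "\<dots> = Re (Q ?xc)"
    unfolding Q_def Re_sum
  proof (rule sum.cong[OF refl])
    fix i assume "i \<in> {..<2*d}" then have i: "i < 2*d" by simp
    have "(S *\<^sub>v ?xc) $ i = (\<Sum>j<2*d. S $$ (i,j) * complex_of_real (x $ j))"
      unfolding mult_mat_vec_sum[OF S_carr xc i] using x by (intro sum.cong refl, auto)
    then show "x $ i * (\<Sum>j<2*d. Re (S $$ (i,j)) * x $ j) = Re (cnj ((S *\<^sub>v ?xc) $ i) * ?xc $ i)"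
      using i x by (simp add: Re_sum sum_distrib_left mult_ac)
  qed
  finally have e: "x \<bullet> (map_mat Re S *\<^sub>v x) = Re (Q ?xc)" .
  have "?xc \<noteq> 0\<^sub>v (2*d)"
  proof
    assume "?xc = 0\<^sub>v (2*d)"
    then have "\<And>i. i < 2*d \<Longrightarrow> x $ i = 0" using x
      by (metis carrier_vecD index_map_vec(1) index_zero_vec(1) of_real_eq_0_iff)
    then have "x = 0\<^sub>v (2*d)" using x by (auto intro!: eq_vecI)
    then show False using x0 by simp
  qed
  then have "Re (Q ?xc) \<noteq> 0" using Q_props(3)[OF xc] by auto
  then show "x \<bullet> (map_mat Re S *\<^sub>v x) > 0" unfolding e using Q_props(2)[OF xc] by simp
qed

lemma S_Sym_gt_R: "S \<in> Sym_gt_R (2*d)"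
  unfolding Sym_gt_R_def using S_carr S_real S_sym S_posdef by simp


lemma eig_core: assumes v: "v \<in> carrier_vec (2*d)" and v0: "v \<noteq> 0\<^sub>v (2*d)"
  and ev: "(S * T) *\<^sub>v v = e \<cdot>\<^sub>v v"
  shows "e \<in> \<real> \<and> -1 \<le> Re e \<and> Re e \<le> 1"
    and "e = -1 \<Longrightarrow> \<exists>x. x \<in> carrier_vec (2*d) \<and> x \<noteq> 0\<^sub>v (2*d) \<and> (\<forall>i<2*d. (Ab *\<^sub>v x) $ i = - (T *\<^sub>v x) $ i)"
proof -
  let ?x = "T *\<^sub>v v"
  have x: "?x \<in> carrier_vec (2*d)" using v by simp
  have Tx: "T *\<^sub>v ?x = v" by (rule theta_theta_vec[OF v])
  have x0: "?x \<noteq> 0\<^sub>v (2*d)"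
  proof
    assume "?x = 0\<^sub>v (2*d)"
    then have "v = T *\<^sub>v 0\<^sub>v (2*d)" using Tx by simp
    also have "\<dots> = 0\<^sub>v (2*d)" by (rule eq_vecI, auto simp: mult_mat_vec_sum[OF T_carr zero_carrier_vec])
    finally show False using v0 by simp
  qed
  have Sx: "S *\<^sub>v ?x = e \<cdot>\<^sub>v v" using ev assoc_mult_mat_vec[OF S_carr T_carr v] by simp
  obtain u w where u: "u \<in> carrier_vec (2*d)" and w: "w \<in> carrier_vec (2*d)"
    and Mv: "M *\<^sub>v ((T *\<^sub>v u) @\<^sub>v (T *\<^sub>v w)) = J *\<^sub>v ?x" and Sx2: "S *\<^sub>v ?x = T *\<^sub>v (w - u)"
    using S_apply[OF x] by blast
  have p: "w - u \<in> carrier_vec (2*d)" and q: "w + u \<in> carrier_vec (2*d)" using u w by auto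
  have "w - u = T *\<^sub>v (T *\<^sub>v (w - u))" by (rule theta_theta_vec[OF p, symmetric])
  also have "\<dots> = T *\<^sub>v (e \<cdot>\<^sub>v v)" unfolding Sx2[symmetric] Sx ..
  also have "\<dots> = e \<cdot>\<^sub>v ?x" by (rule mult_mat_vec[OF T_carr v])
  finally have pe: "w - u = e \<cdot>\<^sub>v ?x" .
  let ?n = "2*d"
  define \<alpha> where "\<alpha> = Re (hf ?n T ?x ?x)"
  define \<rho> where "\<rho> = Re (hf ?n Rm ?x ?x)"
  define \<sigma> where "\<sigma> = Re (hf ?n Rm (w + u) (w + u))"
  have hT: "hf ?n T ?x ?x = complex_of_real \<alpha>"
  proof -
    have "hf ?n T ?x ?x \<in> \<real>" by (rule hf_real, rule T_herm)
    then show ?thesis unfolding \<alpha>_def by (simp add: complex_is_Real_iff complex_eq_iff)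
  qed
  have hR: "hf ?n Rm ?x ?x = complex_of_real \<rho>" unfolding \<rho>_def by (rule hf_Rm_props(1)[OF x])
  have hq: "hf ?n Rm (w + u) (w + u) = complex_of_real \<sigma>" unfolding \<sigma>_def by (rule hf_Rm_props(1)[OF q])
  have r: "\<rho> > 0"
  proof -
    have "\<rho> \<ge> 0" unfolding \<rho>_def by (rule hf_Rm_props(2)[OF x])
    moreover have "\<rho> \<noteq> 0" unfolding \<rho>_def using re_form_pos(2)[OF A_carr' A_pos x] x0 by auto
    ultimately show ?thesis by simp
  qed
  have s: "\<sigma> \<ge> 0" unfolding \<sigma>_def by (rule hf_Rm_props(2)[OF q])
  have lhs: "(\<Sum>i<?n. cnj ((w - u) $ i) * (T *\<^sub>v ?x) $ i) = cnj e * hf ?n T ?x ?x"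
    unfolding pe hf_alt[OF T_carr x] sum_distrib_left using x by (intro sum.cong refl, auto simp: mult_ac)
  have pp: "hf ?n Rm (w - u) (w - u) = cnj e * e * complex_of_real \<rho>" unfolding pe hf_smult[OF x x] hR ..
  have Tpp: "hf ?n T (w - u) (w - u) = cnj e * e * complex_of_real \<alpha>" unfolding pe hf_smult[OF x x] hT ..
  have E: "2 * (cnj e * complex_of_real \<alpha>) = cnj e * e * complex_of_real \<rho> + complex_of_real \<sigma>"
    using form_a[OF u w x Mv] unfolding lhs hT pp hq .
  define K where "K = Re e * Re e + Im e * Im e"
  have N: "cnj e * e = complex_of_real K" unfolding K_def by (simp add: complex_eq_iff)
  have e1: "2 * Re e * \<alpha> = K * \<rho> + \<sigma>"
    using arg_cong[OF E, of Re] unfolding N by simp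
  have e2: "Im e * \<alpha> = 0"
    using arg_cong[OF E, of Im] unfolding N by simp
  have ineq: "\<And>c. \<sigma> + c * c * (K * \<rho>) - 2 * c * (K * \<alpha>) =
     Re (hf ?n Rm ((w + u) - complex_of_real c \<cdot>\<^sub>v (w - u)) ((w + u) - complex_of_real c \<cdot>\<^sub>v (w - u)))"
    unfolding form_b[OF u w x Mv] pp Tpp hq N by simp
  have cz: "\<And>c. (w + u) - complex_of_real c \<cdot>\<^sub>v (w - u) \<in> carrier_vec (2*d)" using u w by simp
  have i1: "\<sigma> + K * \<rho> - 2 * K * \<alpha> \<ge> 0"
    using ineq[of 1] re_form_pos(1)[OF A_carr' A_pos cz[of 1]] by simp
  have i2: "\<sigma> + K * \<rho> + 2 * K * \<alpha> \<ge> 0"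
    using ineq[of "-1"] re_form_pos(1)[OF A_carr' A_pos cz[of "-1"]] by simp
  from real_bound[OF r s e1[unfolded K_def] e2 i1[unfolded K_def] i2[unfolded K_def]] have rb: "Im e = 0 \<and> - 1 \<le> Re e \<and> Re e \<le> 1" .
  then show "e \<in> \<real> \<and> -1 \<le> Re e \<and> Re e \<le> 1" by (simp add: complex_is_Real_iff)
  assume em: "e = -1"
  have "K = 1" unfolding K_def em by simp
  then have "\<sigma> + \<rho> + 2 * \<alpha> = 0" using e1 em by simp
  then have "Re (hf ?n Rm ((w + u) - complex_of_real (-1) \<cdot>\<^sub>v (w - u)) ((w + u) - complex_of_real (-1) \<cdot>\<^sub>v (w - u))) = 0"
    using ineq[of "-1"] \<open>K = 1\<close> by simp
  from re_form_pos(2)[OF A_carr' A_pos cz[of "-1"] this]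
  have z: "(w + u) - complex_of_real (-1) \<cdot>\<^sub>v (w - u) = 0\<^sub>v (2*d)" .
  have uw: "\<And>i. i < 2*d \<Longrightarrow> u $ i = ?x $ i \<and> w $ i = 0"
  proof -
    fix i assume i: "i < 2*d"
    have a1: "w $ i + u $ i + (w $ i - u $ i) = 0" using arg_cong[OF z, of "\<lambda>v. v $ i"] i u w by simp
    have a2: "w $ i - u $ i = - ?x $ i" using arg_cong[OF pe, of "\<lambda>v. v $ i"] i x em u w by simp
    have "w $ i = ((w $ i + u $ i) + (w $ i - u $ i)) / 2" by (simp add: field_simps)
    also have "\<dots> = 0" unfolding a1 by simp
    finally have w0: "w $ i = 0" .
    have "u $ i = w $ i - (w $ i - u $ i)" by simp
    also have "\<dots> = ?x $ i" using a2 w0 by (simp add: algebra_simps)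
    finally show "u $ i = ?x $ i \<and> w $ i = 0" using w0 by simp
  qed
  then have u': "u = ?x" and w': "w = 0\<^sub>v (2*d)" using u w x by (auto intro!: eq_vecI)
  have T0: "T *\<^sub>v 0\<^sub>v (2*d) = 0\<^sub>v (2*d)" by (rule eq_vecI, auto simp: mult_mat_vec_sum[OF T_carr zero_carrier_vec])
  have "\<forall>i<2*d. (Ab *\<^sub>v ?x) $ i = - (T *\<^sub>v ?x) $ i"
  proof (intro allI impI)
    fix i assume i: "i < 2*d"
    show "(Ab *\<^sub>v ?x) $ i = - (T *\<^sub>v ?x) $ i" using F1[OF u w x Mv i] unfolding u' w' T0 using i by simp
  qed
  then show "\<exists>x. x \<in> carrier_vec (2*d) \<and> x \<noteq> 0\<^sub>v (2*d) \<and> (\<forall>i<2*d. (Ab *\<^sub>v x) $ i = - (T *\<^sub>v x) $ i)"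
    using x x0 by blast
qed


lemma S_Sym_p: "S \<in> Sym_p d"
  unfolding Sym_p_def
proof (intro CollectI conjI allI impI)
  show "S \<in> Sym_gt_R (2*d)" by (rule S_Sym_gt_R)
  fix e assume "eigenvalue (S * T) e"
  then obtain v where v: "v \<in> carrier_vec (2*d)" and v0: "v \<noteq> 0\<^sub>v (2*d)" and ev: "(S * T) *\<^sub>v v = e \<cdot>\<^sub>v v"
    unfolding eigenvalue_def eigenvector_def by auto
  from eig_core(1)[OF v v0 ev] show "e \<in> \<real>" "-1 \<le> Re e" "Re e \<le> 1" by auto
qed

lemma S_qnd: assumes dA: "det (1\<^sub>m (2*d) + A * T) \<noteq> 0"
  shows "det (1\<^sub>m (2*d) + S * T) \<noteq> 0"
proof
  assume "det (1\<^sub>m (2*d) + S * T) = 0"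
  have STc: "S * T \<in> carrier_mat (2*d) (2*d)" by (rule mult_carrier_mat[OF S_carr T_carr])
  have Bc: "1\<^sub>m (2*d) + S * T \<in> carrier_mat (2*d) (2*d)" using STc by simp
  obtain v where v: "v \<in> carrier_vec (2*d)" and v0: "v \<noteq> 0\<^sub>v (2*d)" and Bv: "(1\<^sub>m (2*d) + S * T) *\<^sub>v v = 0\<^sub>v (2*d)"
    using det_0_iff_vec_prod_zero[OF Bc] \<open>det (1\<^sub>m (2*d) + S * T) = 0\<close> by blast
  have "(1\<^sub>m (2*d) + S * T) *\<^sub>v v = v + (S * T) *\<^sub>v v"
    using add_mult_distrib_mat_vec[OF one_carrier_mat STc v] v by simp
  then have e0: "v + (S * T) *\<^sub>v v = 0\<^sub>v (2*d)" using Bv by simp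
  have ev: "(S * T) *\<^sub>v v = (-1) \<cdot>\<^sub>v v"
  proof (rule eq_vecI)
    fix i assume "i < dim_vec ((-1) \<cdot>\<^sub>v v)" then have i: "i < 2*d" using v by simp
    have "v $ i + ((S * T) *\<^sub>v v) $ i = 0" using arg_cong[OF e0, of "\<lambda>w. w $ i"] i STc by simp
    then show "((S * T) *\<^sub>v v) $ i = ((-1) \<cdot>\<^sub>v v) $ i" using i v by (simp add: algebra_simps eq_neg_iff_add_eq_0)
  qed (use v STc in simp)
  obtain x where x: "x \<in> carrier_vec (2*d)" and x0: "x \<noteq> 0\<^sub>v (2*d)"
    and ax: "\<forall>i<2*d. (Ab *\<^sub>v x) $ i = - (T *\<^sub>v x) $ i"
    using eig_core(2)[OF v v0 ev] by auto
  let ?xb = "vec (2*d) (\<lambda>i. cnj (x $ i))"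
  have xb: "?xb \<in> carrier_vec (2*d)" by simp
  have xb0: "?xb \<noteq> 0\<^sub>v (2*d)"
  proof
    assume "?xb = 0\<^sub>v (2*d)"
    then have "\<And>i. i < 2*d \<Longrightarrow> x $ i = 0"
      by (metis complex_cnj_zero_iff index_vec index_zero_vec(1))
    then have "x = 0\<^sub>v (2*d)" using x by (auto intro!: eq_vecI)
    then show False using x0 by simp
  qed
  have AmT: "A - T \<in> carrier_mat (2*d) (2*d)" by (rule minus_carrier_mat[OF T_carr])
  have k: "(A - T) *\<^sub>v ?xb = 0\<^sub>v (2*d)"
  proof (rule eq_vecI)
    fix i assume "i < dim_vec (0\<^sub>v (2*d) :: complex vec)" then have i: "i < 2*d" by simp
    have a: "(A *\<^sub>v ?xb) $ i = cnj ((Ab *\<^sub>v x) $ i)"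
      unfolding mult_mat_vec_sum[OF A_carr' xb i] mult_mat_vec_sum[OF Ab_carr x i] cnj_sum
      by (rule sum.cong[OF refl], auto simp: Ab_idx[OF i])
    have t: "(T *\<^sub>v ?xb) $ i = - cnj ((T *\<^sub>v x) $ i)"
      unfolding theta_mult_vec_index[OF xb i] theta_mult_vec_index[OF x i] using i by auto
    have "((A - T) *\<^sub>v ?xb) $ i = (A *\<^sub>v ?xb) $ i - (T *\<^sub>v ?xb) $ i"
      unfolding minus_mult_distrib_mat_vec[OF A_carr' T_carr xb] using i by simp
    also have "\<dots> = cnj ((Ab *\<^sub>v x) $ i + (T *\<^sub>v x) $ i)" unfolding a t by simp
    also have "\<dots> = 0" using ax i by simp
    finally show "((A - T) *\<^sub>v ?xb) $ i = 0\<^sub>v (2*d) $ i" using i by simp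
  qed (use AmT in simp)
  have d1: "det (A - T) = 0" using det_0_iff_vec_prod_zero[OF AmT] xb xb0 k by blast
  have tr: "transpose_mat (A - T) = A + T"
    by (rule eq_matI, auto simp: A_idx_sym theta_index)
  have "det (A + T) = 0" using det_transpose[OF AmT] d1 unfolding tr by simp
  moreover have ApT: "A + T \<in> carrier_mat (2*d) (2*d)" by (rule add_carrier_mat[OF T_carr])
  ultimately obtain z where z: "z \<in> carrier_vec (2*d)" and z0: "z \<noteq> 0\<^sub>v (2*d)" and Az: "(A + T) *\<^sub>v z = 0\<^sub>v (2*d)"
    using det_0_iff_vec_prod_zero[OF ApT] by blast
  let ?y = "T *\<^sub>v z"
  have y: "?y \<in> carrier_vec (2*d)" using z by simp
  have Ty: "T *\<^sub>v ?y = z" by (rule theta_theta_vec[OF z])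
  have y0: "?y \<noteq> 0\<^sub>v (2*d)"
  proof
    assume "?y = 0\<^sub>v (2*d)"
    then have "z = T *\<^sub>v 0\<^sub>v (2*d)" using Ty by simp
    also have "\<dots> = 0\<^sub>v (2*d)" by (rule eq_vecI, auto simp: mult_mat_vec_sum[OF T_carr zero_carrier_vec])
    finally show False using z0 by simp
  qed
  have ATc: "A * T \<in> carrier_mat (2*d) (2*d)" by (rule mult_carrier_mat[OF A_carr' T_carr])
  have "(1\<^sub>m (2*d) + A * T) *\<^sub>v ?y = ?y + A *\<^sub>v (T *\<^sub>v ?y)"
    using add_mult_distrib_mat_vec[OF one_carrier_mat ATc y] assoc_mult_mat_vec[OF A_carr' T_carr y] y by simp
  also have "\<dots> = 0\<^sub>v (2*d)"
  proof (rule eq_vecI)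
    fix i assume "i < dim_vec (0\<^sub>v (2*d) :: complex vec)" then have i: "i < 2*d" by simp
    have "((A + T) *\<^sub>v z) $ i = (A *\<^sub>v z) $ i + (T *\<^sub>v z) $ i"
      unfolding add_mult_distrib_mat_vec[OF A_carr' T_carr z] using i by simp
    then have "(A *\<^sub>v z) $ i + (T *\<^sub>v z) $ i = 0" using Az i by simp
    then show "(?y + A *\<^sub>v (T *\<^sub>v ?y)) $ i = 0\<^sub>v (2*d) $ i" unfolding Ty using i z by (simp add: algebra_simps)
  qed (use y in simp)
  finally have "(1\<^sub>m (2*d) + A * T) *\<^sub>v ?y = 0\<^sub>v (2*d)" .
  then have "det (1\<^sub>m (2*d) + A * T) = 0"
    using det_0_iff_vec_prod_zero[of "1\<^sub>m (2*d) + A * T" "2*d"] ATc y y0 by auto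
  then show False using dA by simp
qed

end

theorem mainTheorem8:
  fixes d :: nat and A :: "complex mat"
  assumes "d \<ge> 1"
  shows "(A \<in> Sym_gt_C (2*d) \<longrightarrow> sharp d (conj_mat A) A \<in> Sym_p d) \<and>
         (A \<in> Sym_gt_C_qnd d \<longrightarrow> sharp d (conj_mat A) A \<in> Sym_p_qnd d)"
proof (intro conjI impI)
  assume "A \<in> Sym_gt_C (2*d)"
  then interpret ctx d A by (unfold_locales, auto simp: Sym_gt_C_def)
  show "sharp d (conj_mat A) A \<in> Sym_p d" by (rule S_Sym_p)
next
  assume a: "A \<in> Sym_gt_C_qnd d"
  then have "A \<in> Sym_gt_C (2*d)" and dA: "det (1\<^sub>m (2*d) + A * theta d) \<noteq> 0" unfolding Sym_gt_C_qnd_def by auto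
  then interpret ctx d A by (unfold_locales, auto simp: Sym_gt_C_def)
  show "sharp d (conj_mat A) A \<in> Sym_p_qnd d"
    unfolding Sym_p_qnd_def using S_Sym_p S_qnd[OF dA] by simp
qed

end
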